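(* Let $\rho$ be a density operator on a $d$-dimensional complex Hilbert space $\mathbb{H}$, let $\{\ket{a_i}\}_{i=1}^d$ be an orthonormal basis and $\{\ket{b_k}\}_{k=1}^d$ an orthonormal basis mutually unbiased with respect to $\{\ket{a_i}\}$ (i.e. $|\langle a_i|b_k\rangle|^2 = 1/d$ for all $i,k$). Define the extended KD distribution $Q^\star_{i,j,k} = \langle a_j|b_k\rangle\langle b_k|a_i\rangle\langle a_i|\rho|a_j\rangle$, the moments $r_n = \sum_{i,j,k} (Q^\star_{i,j,k})^n$, and for a positive integer $m$ the $(m+1)\times(m+1)$ Hankel matrix $H_m(\mathbf{r})$ with entries $[H_m(\mathbf{r})]_{ij} = r_{i+j+1}$, $i,j\in\{0,\dots,m\}$. If for some positive integer $m$ the inequality $-\det[H_m(\mathbf{r})] > 0$ holds (in particular $\det[H_m(\mathbf{r})]$ is real), then $\rho$ has nonzero $\ell_1$-norm of coherence in the basis $\{\ket{a_i}\}$, i.e. $\mathcal{C}_{\ell_1}(\rho,\{\ket{a_i}\}) := \sum_{i\neq j} |\langle a_i|\rho|a_j\rangle| > 0$.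
   Context: The $\ell_1$-norm of coherence of $\rho$ with respect to the basis $\{\ket{a_i}\}$ is the sum of the absolute values of the off-diagonal entries of $\rho$ in that basis. *)

theory Defs
  imports "HOL-Analysis.Analysis"
begin

text \<open>Hilbert space: complex^'n, with 'n a finite type of cardinality d.
  Inner product antilinear in the first argument (Dirac bra-ket convention).\<close>
definition braket :: "complex^'n \<Rightarrow> complex^'n \<Rightarrow> complex" where
  "braket x y = (\<Sum>i\<in>UNIV. cnj (x $ i) * y $ i)"

definition density_operator :: "complex^'n^'n \<Rightarrow> bool" where
  "density_operator \<rho> \<longleftrightarrow>
     (\<forall>i j. \<rho> $ i $ j = cnj (\<rho> $ j $ i)) \<and>
     (\<forall>v. Im (braket v (\<rho> *v v)) = 0 \<and> Re (braket v (\<rho> *v v)) \<ge> 0) \<and>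
     (\<Sum>i\<in>UNIV. \<rho> $ i $ i) = 1"

definition orthonormal_basis :: "('n::finite \<Rightarrow> complex^'n) \<Rightarrow> bool" where
  "orthonormal_basis a \<longleftrightarrow> (\<forall>i j. braket (a i) (a j) = (if i = j then 1 else 0))"

definition mutually_unbiased :: "('n::finite \<Rightarrow> complex^'n) \<Rightarrow> ('n \<Rightarrow> complex^'n) \<Rightarrow> bool" where
  "mutually_unbiased a b \<longleftrightarrow> (\<forall>i k. (cmod (braket (a i) (b k)))^2 = 1 / real CARD('n))"

definition KD_ext :: "complex^'n^'n \<Rightarrow> ('n \<Rightarrow> complex^'n) \<Rightarrow> ('n \<Rightarrow> complex^'n) \<Rightarrow> 'n \<Rightarrow> 'n \<Rightarrow> 'n \<Rightarrow> complex" where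
  "KD_ext \<rho> a b i j k = braket (a j) (b k) * braket (b k) (a i) * braket (a i) (\<rho> *v a j)"

definition KD_moment :: "complex^'n^'n \<Rightarrow> ('n::finite \<Rightarrow> complex^'n) \<Rightarrow> ('n \<Rightarrow> complex^'n) \<Rightarrow> nat \<Rightarrow> complex" where
  "KD_moment \<rho> a b n = (\<Sum>i\<in>UNIV. \<Sum>j\<in>UNIV. \<Sum>k\<in>UNIV. (KD_ext \<rho> a b i j k) ^ n)"

definition det_sq :: "nat \<Rightarrow> (nat \<Rightarrow> nat \<Rightarrow> complex) \<Rightarrow> complex" where
  "det_sq m M = (\<Sum>p\<in>{p. p permutes {0..m}}. of_int (sign p) * (\<Prod>i\<in>{0..m}. M i (p i)))"

definition hankel :: "(nat \<Rightarrow> complex) \<Rightarrow> nat \<Rightarrow> nat \<Rightarrow> complex" where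
  "hankel r i j = r (i + j + 1)"

definition coherence_l1 :: "complex^'n^'n \<Rightarrow> ('n::finite \<Rightarrow> complex^'n) \<Rightarrow> real" where
  "coherence_l1 \<rho> a = (\<Sum>i\<in>UNIV. \<Sum>j\<in>UNIV - {i}. cmod (braket (a i) (\<rho> *v a j)))"

end

theory Submission
  imports Defs "Jordan_Normal_Form.Determinant"
begin

no_notation Matrix.vec_index (infixl \<open>$\<close> 100)

lemma moment_det_nonneg:
  fixes c x :: "'l \<Rightarrow> real" and L :: "'l set"
  assumes L: "finite L" and c: "\<And>l. l \<in> L \<Longrightarrow> c l \<ge> 0"
  shows "Determinant.det (Matrix.mat n n (\<lambda>(i,j). \<Sum>l\<in>L. c l * x l ^ (i+j))) \<ge> 0"
proof -
  let ?U = "{0..<n}"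
  let ?F = "PiE ?U (\<lambda>_. L)"
  let ?P = "{p. p permutes ?U}"
  define V where "V f = Determinant.det (Matrix.mat n n (\<lambda>(i,j). x (f i) ^ j))" for f :: "nat \<Rightarrow> 'l"
  define w where "w f = (\<Prod>i\<in>?U. c (f i) * x (f i) ^ i)" for f :: "nat \<Rightarrow> 'l"
  let ?M = "Matrix.mat n n (\<lambda>(i,j). \<Sum>l\<in>L. c l * x l ^ (i+j))"
  have V': "V f = (\<Sum>p\<in>?P. of_int (sign p) * (\<Prod>i\<in>?U. x (f i) ^ p i))" for f
    unfolding V_def
    by (subst det_def'[of _ n]) (auto intro!: sum.cong[OF refl] prod.cong[OF refl] simp: permutes_in_image)
  have step1: "Determinant.det ?M = (\<Sum>f\<in>?F. w f * V f)"
  proof -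
    have "Determinant.det ?M = (\<Sum>p\<in>?P. of_int (sign p) * (\<Prod>i\<in>?U. \<Sum>l\<in>L. c l * x l ^ i * x l ^ p i))"
      by (subst det_def'[of _ n]) (auto intro!: sum.cong[OF refl] prod.cong[OF refl] simp: permutes_in_image power_add mult.assoc)
    also have "\<dots> = (\<Sum>p\<in>?P. of_int (sign p) * (\<Sum>f\<in>?F. \<Prod>i\<in>?U. c (f i) * x (f i) ^ i * x (f i) ^ p i))"
      by (simp add: prod_sum_PiE L)
    also have "\<dots> = (\<Sum>p\<in>?P. \<Sum>f\<in>?F. w f * (of_int (sign p) * (\<Prod>i\<in>?U. x (f i) ^ p i)))"
      by (simp add: w_def sum_distrib_left prod.distrib mult_ac)
    also have "\<dots> = (\<Sum>f\<in>?F. w f * V f)"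
      by (subst sum.swap) (simp add: V' sum_distrib_left)
    finally show ?thesis .
  qed
  have step2: "V (f \<circ> \<sigma>) = of_int (sign \<sigma>) * V f" if "\<sigma> permutes ?U" for f \<sigma>
  proof -
    have "V (f \<circ> \<sigma>) = Determinant.det (Matrix.mat n n (\<lambda>(i,j). (Matrix.mat n n (\<lambda>(i,j). x (f i) ^ j)) $$ (\<sigma> i, j)))"
    proof -
      have lt: "\<sigma> i < n" if "i < n" for i using permutes_in_image[OF \<open>\<sigma> permutes ?U\<close>, of i] that by auto
      show ?thesis unfolding V_def by (rule arg_cong[where f=Determinant.det]) (auto simp: lt)
    qed
    also have "\<dots> = of_int (sign \<sigma>) * V f" unfolding V_def by (rule det_permute_rows[OF _ that]) auto
    finally show ?thesis .
  qed
  have step3: "(\<Sum>f\<in>?F. w f * V f) = (\<Sum>f\<in>?F. w (f \<circ> \<sigma>) * V (f \<circ> \<sigma>))" if s: "\<sigma> permutes ?U" for \<sigma>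
  proof -
    have si: "inv_into UNIV \<sigma> permutes ?U" using s by (rule permutes_inv)
    have mem: "f \<circ> \<tau> \<in> ?F" if "f \<in> ?F" "\<tau> permutes ?U" for f \<tau>
      using that by (auto simp: PiE_iff extensional_def permutes_in_image permutes_not_in)
    have "bij_betw (\<lambda>f. f \<circ> \<sigma>) ?F ?F"
      apply (rule bij_betwI[where g="\<lambda>f. f \<circ> inv_into UNIV \<sigma>"])
      using mem s si by (auto simp: comp_assoc permutes_inv_o[OF s])
    then show ?thesis by (rule sum.reindex_bij_betw[symmetric])
  qed
  have step4: "(\<Sum>\<sigma>\<in>?P. of_int (sign \<sigma>) * w (f \<circ> \<sigma>)) = (\<Prod>i\<in>?U. c (f i)) * V f" for f
  proof -
    have "(\<Sum>\<sigma>\<in>?P. of_int (sign \<sigma>) * w (f \<circ> \<sigma>)) =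
       (\<Sum>\<sigma>\<in>?P. (\<Prod>i\<in>?U. c (f i)) * (of_int (sign \<sigma>) * (\<Prod>i\<in>?U. x (f (\<sigma> i)) ^ i)))"
    proof (rule sum.cong[OF refl])
      fix \<sigma> assume "\<sigma> \<in> ?P"
      then have s: "\<sigma> permutes ?U" by simp
      have "(\<Prod>i\<in>?U. c (f (\<sigma> i))) = (\<Prod>i\<in>?U. c (f i))"
        using prod.permute[OF s, of "\<lambda>i. c (f i)"] by (simp add: comp_def)
      then show "of_int (sign \<sigma>) * w (f \<circ> \<sigma>) = (\<Prod>i\<in>?U. c (f i)) * (of_int (sign \<sigma>) * (\<Prod>i\<in>?U. x (f (\<sigma> i)) ^ i))"
        by (simp add: w_def prod.distrib)
    qed
    also have "\<dots> = (\<Prod>i\<in>?U. c (f i)) * V f"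
      unfolding V_def
      by (subst det_col[of _ n]) (auto simp: sum_distrib_left atLeast0LessThan intro!: sum.cong[OF refl] prod.cong[OF refl] permutes_in_image)
    finally show ?thesis .
  qed
  have "real (card ?P) * Determinant.det ?M = (\<Sum>\<sigma>\<in>?P. \<Sum>f\<in>?F. w f * V f)"
    by (simp add: step1)
  also have "\<dots> = (\<Sum>\<sigma>\<in>?P. \<Sum>f\<in>?F. w (f \<circ> \<sigma>) * (of_int (sign \<sigma>) * V f))"
    by (rule sum.cong[OF refl]) (simp add: step2 step3)
  also have "\<dots> = (\<Sum>f\<in>?F. V f * (\<Sum>\<sigma>\<in>?P. of_int (sign \<sigma>) * w (f \<circ> \<sigma>)))"
    by (subst sum.swap) (simp add: sum_distrib_left mult_ac)
  also have "\<dots> = (\<Sum>f\<in>?F. (\<Prod>i\<in>?U. c (f i)) * (V f)^2)"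
    by (simp add: step4 power2_eq_square mult_ac)
  also have "\<dots> \<ge> 0"
    by (intro sum_nonneg mult_nonneg_nonneg prod_nonneg c) (auto simp: PiE_iff)
  finally have "0 \<le> real (card ?P) * Determinant.det ?M" .
  moreover have "card ?P > 0"
    using finite_permutations[of ?U] by (metis (no_types) card_gt_0_iff empty_iff mem_Collect_eq permutes_id finite_atLeastLessThan)
  ultimately show ?thesis by (simp add: zero_le_mult_iff)
qed


lemma braket_cnj: "braket y x = cnj (braket x y)"
  unfolding braket_def by (simp add: mult.commute)

lemma det_sq_of_real:
  fixes R :: "nat \<Rightarrow> nat \<Rightarrow> real"
  shows "det_sq m (\<lambda>i j. complex_of_real (R i j)) = complex_of_real (Determinant.det (Matrix.mat (Suc m) (Suc m) (\<lambda>(i,j). R i j)))"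
proof -
  have e: "{0..<Suc m} = {0..m}" by auto
  have "Determinant.det (Matrix.mat (Suc m) (Suc m) (\<lambda>(i,j). R i j)) =
     (\<Sum>p\<in>{p. p permutes {0..m}}. of_int (sign p) * (\<Prod>i\<in>{0..m}. R i (p i)))"
  proof (subst det_def'[of _ "Suc m"])
    show "Matrix.mat (Suc m) (Suc m) (\<lambda>(i,j). R i j) \<in> carrier_mat (Suc m) (Suc m)" by simp
    have lt: "q i < Suc m" if "q permutes {0..m}" "i \<le> m" for q i
      using permutes_in_image[OF that(1), of i] that(2) by auto
    show "(\<Sum>p | p permutes {0..<Suc m}. of_int (sign p) * (\<Prod>i = 0..<Suc m. Matrix.mat (Suc m) (Suc m) (\<lambda>(i,j). R i j) $$ (i, p i))) =
     (\<Sum>p\<in>{p. p permutes {0..m}}. of_int (sign p) * (\<Prod>i\<in>{0..m}. R i (p i)))"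
      unfolding e by (intro sum.cong[OF refl] arg_cong2[where f="(*)"] refl prod.cong) (auto simp: lt)
  qed
  then show ?thesis unfolding det_sq_def by (simp add: of_real_sum of_real_prod)
qed

theorem theorem3:
  fixes \<rho> :: "complex^'n^'n" and a b :: "'n \<Rightarrow> complex^'n" and m :: nat
  assumes "density_operator \<rho>"
    and "orthonormal_basis a" and "orthonormal_basis b"
    and "mutually_unbiased a b"
    and "m \<ge> 1"
    and "Im (det_sq m (hankel (KD_moment \<rho> a b))) = 0"
    and "- Re (det_sq m (hankel (KD_moment \<rho> a b))) > 0"
  shows "coherence_l1 \<rho> a > 0"
proof (rule ccontr)
  assume nc: "\<not> coherence_l1 \<rho> a > 0"
  have "coherence_l1 \<rho> a \<ge> 0" unfolding coherence_l1_def by (intro sum_nonneg) auto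
  with nc have c0: "coherence_l1 \<rho> a = 0" by linarith
  have off: "braket (a i) (\<rho> *v a j) = 0" if "i \<noteq> j" for i j
  proof -
    have "\<forall>i\<in>UNIV. (\<Sum>j\<in>UNIV - {i}. cmod (braket (a i) (\<rho> *v a j))) = 0"
      using c0 unfolding coherence_l1_def by (subst sum_nonneg_eq_0_iff[symmetric]) (auto intro: sum_nonneg)
    then have "(\<Sum>j\<in>UNIV - {i}. cmod (braket (a i) (\<rho> *v a j))) = 0" by auto
    then have "\<forall>j\<in>UNIV - {i}. cmod (braket (a i) (\<rho> *v a j)) = 0"
      by (subst sum_nonneg_eq_0_iff[symmetric]) auto
    then show ?thesis using that by auto
  qed
  define p where "p i = Re (braket (a i) (\<rho> *v a i))" for i
  have dens: "Im (braket v (\<rho> *v v)) = 0 \<and> Re (braket v (\<rho> *v v)) \<ge> 0" for v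
    using assms(1) unfolding density_operator_def by blast
  have p0: "p i \<ge> 0" for i using dens[of "a i"] unfolding p_def by auto
  have pe: "braket (a i) (\<rho> *v a i) = complex_of_real (p i)" for i
    using dens[of "a i"] unfolding p_def by (simp add: complex_eq_iff)
  define d where "d = real CARD('n)"
  have d0: "d > 0" unfolding d_def by simp
  have ab: "braket (a i) (b k) * braket (b k) (a i) = complex_of_real (1 / d)" for i k
  proof -
    have "braket (a i) (b k) * braket (b k) (a i) = complex_of_real ((cmod (braket (a i) (b k)))^2)"
      using complex_norm_square[of "braket (a i) (b k)"] by (simp add: braket_cnj[of "b k"])
    then show ?thesis using assms(4) unfolding mutually_unbiased_def d_def by simp
  qed
  have KD: "KD_ext \<rho> a b i j k = (if i = j then complex_of_real (p i / d) else 0)" for i j k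
    unfolding KD_ext_def using ab off pe by (auto simp: of_real_divide)
  have mom: "KD_moment \<rho> a b n = complex_of_real (\<Sum>l\<in>UNIV. d * (p l / d) ^ n)" if "n \<ge> 1" for n
  proof -
    have z: "(if i = j then complex_of_real (p i / d) else 0) ^ n = (if i = j then complex_of_real (p i / d) ^ n else 0)" for i j :: 'n
      using that by auto
    have cd: "complex_of_nat CARD('n) = complex_of_real d" by (simp add: d_def)
    show ?thesis unfolding KD_moment_def KD z
      by (simp add: of_real_sum sum.delta' cd if_distrib[of "(*) (complex_of_real d)"] cong: if_cong)
  qed
  have hk: "hankel (KD_moment \<rho> a b) = (\<lambda>i j. complex_of_real (\<Sum>l\<in>UNIV. p l * (p l / d) ^ (i + j)))"
  proof (intro ext)
    fix i j :: nat
    have "d * (p l / d) ^ (i + j + 1) = p l * (p l / d) ^ (i + j)" for l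
      using d0 by (simp add: field_simps)
    then show "hankel (KD_moment \<rho> a b) i j = complex_of_real (\<Sum>l\<in>UNIV. p l * (p l / d) ^ (i + j))"
      unfolding hankel_def by (subst mom) auto
  qed
  have "Determinant.det (Matrix.mat (Suc m) (Suc m) (\<lambda>(i,j). \<Sum>l\<in>UNIV. p l * (p l / d) ^ (i + j))) \<ge> 0"
    by (rule moment_det_nonneg) (auto simp: p0)
  moreover have "Re (det_sq m (hankel (KD_moment \<rho> a b))) =
     Determinant.det (Matrix.mat (Suc m) (Suc m) (\<lambda>(i,j). \<Sum>l\<in>UNIV. p l * (p l / d) ^ (i + j)))"
    unfolding hk det_sq_of_real by simp
  ultimately show False using assms(7) by linarith
qed

end
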